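(* Let $V$ be a real vector space with basis $\{e_1,\dots,e_p,\tilde e_1,\dots,\tilde e_p\}$ and corresponding dual coordinates $(x^1,\dots,x^p,\tilde x^1,\dots,\tilde x^p)$. Define an inner product of signature $(p,p)$ on $V$ by $(e_i,\tilde e_j)=\delta_{ij}$ and $(e_i,e_j)=(\tilde e_i,\tilde e_j)=0$ for all $i,j$. Give $W:=V\oplus\mathbb{R}$ the direct sum inner product (with the standard positive inner product on $\mathbb{R}$), of signature $(p,p+1)$. Let $f(\tilde x^1,\dots,\tilde x^p)$ be a smooth real valued function with $df(0)=0$ and $\det(\partial_{\tilde x^i}\partial_{\tilde x^j}f)(0)\ne0$. Then the embedding $F:=\mathrm{id}\oplus f:V\to W$, $v\mapsto(v,f(\tilde x(v)))$, defines a hypersurface $(M,g)$ of $W$ (with the induced metric) which, sufficiently close to the origin, is a pseudo-Riemannian manifold of signature $(p,p)$ that is spacelike and timelike rank $2$ Jordan IP and whose curvature is nilpotent.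
   Context: Signature $(a,b)$: maximal negative definite subspaces have dimension $a$, maximal positive definite subspaces dimension $b$. Curvature ${}^gR(x,y)=\nabla_x\nabla_y-\nabla_y\nabla_x-\nabla_{[x,y]}$. For a non-degenerate oriented $2$-plane $\pi\subset T_PM$ with oriented basis $\{e_1,e_2\}$, ${}^gR(\pi):=|g(e_1,e_1)g(e_2,e_2)-g(e_1,e_2)^2|^{-1/2}{}^gR(e_1,e_2)$; $\pi$ is spacelike (timelike) if $g|_\pi$ is positive (negative) definite. The manifold is spacelike rank $2$ Jordan IP if at each point $\operatorname{rank}{}^gR(\pi)=2$ for every oriented spacelike $2$-plane and all such operators at a point have the same real Jordan normal form; timelike rank $2$ Jordan IP is defined analogously with timelike $2$-planes. The curvature is nilpotent if ${}^gR_P(x,y)$ is nilpotent for all $P$ and $x,y\in T_PM$. *)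

theory Defs
  imports "HOL-Analysis.Analysis"
begin

definition partial :: "'i::finite \<Rightarrow> (real^'i \<Rightarrow> 'b::real_normed_vector) \<Rightarrow> real^'i \<Rightarrow> 'b" where
  "partial k \<phi> P = frechet_derivative \<phi> (at P) (axis k 1)"

fun iter_partial :: "'i::finite list \<Rightarrow> (real^'i \<Rightarrow> real) \<Rightarrow> real^'i \<Rightarrow> real" where
  "iter_partial [] \<phi> = \<phi>"
| "iter_partial (k # ks) \<phi> = partial k (iter_partial ks \<phi>)"

definition smooth_on :: "(real^'i::finite) set \<Rightarrow> (real^'i \<Rightarrow> real) \<Rightarrow> bool" where
  "smooth_on S \<phi> \<longleftrightarrow> (\<forall>ks. iter_partial ks \<phi> differentiable_on S)"

text \<open>A metric on an open subset of real^'i is given by a family of bilinear forms g P.\<close>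
type_synonym 'i metric = "real^'i \<Rightarrow> real^'i \<Rightarrow> real^'i \<Rightarrow> real"

definition metric_matrix :: "'i::finite metric \<Rightarrow> real^'i \<Rightarrow> real^'i^'i" where
  "metric_matrix g P = (\<chi> a b. g P (axis a 1) (axis b 1))"

text \<open>Christoffel symbols of the Levi-Civita connection:
  christoffel g P k i j = Gamma^k_{ij}, i.e. nabla_{d_i} d_j = sum_k Gamma^k_{ij} d_k.\<close>
definition christoffel :: "'i::finite metric \<Rightarrow> real^'i \<Rightarrow> 'i \<Rightarrow> 'i \<Rightarrow> 'i \<Rightarrow> real" where
  "christoffel g P k i j =
     (1/2) * (\<Sum>l\<in>UNIV. matrix_inv (metric_matrix g P) $ k $ l *
        (partial i (\<lambda>Q. g Q (axis j 1) (axis l 1)) P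
       + partial j (\<lambda>Q. g Q (axis i 1) (axis l 1)) P
       - partial l (\<lambda>Q. g Q (axis i 1) (axis j 1)) P))"

definition cov_deriv :: "'i::finite metric \<Rightarrow> (real^'i \<Rightarrow> real^'i) \<Rightarrow> (real^'i \<Rightarrow> real^'i) \<Rightarrow> real^'i \<Rightarrow> real^'i" where
  "cov_deriv g X Y P = frechet_derivative Y (at P) (X P)
     + (\<chi> k. \<Sum>i\<in>UNIV. \<Sum>j\<in>UNIV. christoffel g P k i j * X P $ i * Y P $ j)"

definition lie_bracket :: "(real^'i::finite \<Rightarrow> real^'i) \<Rightarrow> (real^'i \<Rightarrow> real^'i) \<Rightarrow> real^'i \<Rightarrow> real^'i" where
  "lie_bracket X Y P = frechet_derivative Y (at P) (X P) - frechet_derivative X (at P) (Y P)"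

text \<open>Curvature operator R(x,y) = nabla_x nabla_y - nabla_y nabla_x - nabla_[x,y] at P,
  evaluated on the (coordinate-constant) extensions of the tangent vectors x, y, z.\<close>
definition curvature :: "'i::finite metric \<Rightarrow> real^'i \<Rightarrow> real^'i \<Rightarrow> real^'i \<Rightarrow> real^'i \<Rightarrow> real^'i" where
  "curvature g P x y z =
     (let X = (\<lambda>_. x); Y = (\<lambda>_. y); Z = (\<lambda>_. z) in
        cov_deriv g X (cov_deriv g Y Z) P - cov_deriv g Y (cov_deriv g X Z) P
        - cov_deriv g (lie_bracket X Y) Z P)"

definition neg_index :: "(real^'i::finite \<Rightarrow> real^'i \<Rightarrow> real) \<Rightarrow> nat" where
  "neg_index B = Max {dim S | S. subspace S \<and> (\<forall>v\<in>S. v \<noteq> 0 \<longrightarrow> B v v < 0)}"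

definition pos_index :: "(real^'i::finite \<Rightarrow> real^'i \<Rightarrow> real) \<Rightarrow> nat" where
  "pos_index B = Max {dim S | S. subspace S \<and> (\<forall>v\<in>S. v \<noteq> 0 \<longrightarrow> B v v > 0)}"

definition has_signature :: "(real^'i::finite \<Rightarrow> real^'i \<Rightarrow> real) \<Rightarrow> nat \<Rightarrow> nat \<Rightarrow> bool" where
  "has_signature B a b \<longleftrightarrow> neg_index B = a \<and> pos_index B = b"

definition spacelike_pair :: "'i::finite metric \<Rightarrow> real^'i \<Rightarrow> real^'i \<Rightarrow> real^'i \<Rightarrow> bool" where
  "spacelike_pair g P e1 e2 \<longleftrightarrow> independent {e1, e2} \<and> e1 \<noteq> e2 \<and>
     (\<forall>v\<in>span {e1, e2}. v \<noteq> 0 \<longrightarrow> g P v v > 0)"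

definition timelike_pair :: "'i::finite metric \<Rightarrow> real^'i \<Rightarrow> real^'i \<Rightarrow> real^'i \<Rightarrow> bool" where
  "timelike_pair g P e1 e2 \<longleftrightarrow> independent {e1, e2} \<and> e1 \<noteq> e2 \<and>
     (\<forall>v\<in>span {e1, e2}. v \<noteq> 0 \<longrightarrow> g P v v < 0)"

definition plane_curv :: "'i::finite metric \<Rightarrow> real^'i \<Rightarrow> real^'i \<Rightarrow> real^'i \<Rightarrow> real^'i \<Rightarrow> real^'i" where
  "plane_curv g P e1 e2 =
     (\<lambda>z. (1 / sqrt \<bar>g P e1 e1 * g P e2 e2 - (g P e1 e2)^2\<bar>) *\<^sub>R curvature g P e1 e2 z)"

text \<open>Two linear endomorphisms have the same real Jordan normal form iff they are similar.\<close>
definition same_jordan_form :: "(real^'i::finite \<Rightarrow> real^'i) \<Rightarrow> (real^'i \<Rightarrow> real^'i) \<Rightarrow> bool" where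
  "same_jordan_form A B \<longleftrightarrow> (\<exists>T. linear T \<and> bij T \<and> A \<circ> T = T \<circ> B)"

definition spacelike_rank2_JIP_at :: "'i::finite metric \<Rightarrow> real^'i \<Rightarrow> bool" where
  "spacelike_rank2_JIP_at g P \<longleftrightarrow>
     (\<forall>e1 e2. spacelike_pair g P e1 e2 \<longrightarrow> dim (range (plane_curv g P e1 e2)) = 2) \<and>
     (\<forall>e1 e2 f1 f2. spacelike_pair g P e1 e2 \<longrightarrow> spacelike_pair g P f1 f2 \<longrightarrow>
        same_jordan_form (plane_curv g P e1 e2) (plane_curv g P f1 f2))"

definition timelike_rank2_JIP_at :: "'i::finite metric \<Rightarrow> real^'i \<Rightarrow> bool" where
  "timelike_rank2_JIP_at g P \<longleftrightarrow>
     (\<forall>e1 e2. timelike_pair g P e1 e2 \<longrightarrow> dim (range (plane_curv g P e1 e2)) = 2) \<and>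
     (\<forall>e1 e2 f1 f2. timelike_pair g P e1 e2 \<longrightarrow> timelike_pair g P f1 f2 \<longrightarrow>
        same_jordan_form (plane_curv g P e1 e2) (plane_curv g P f1 f2))"

definition nilpotent_curvature_at :: "'i::finite metric \<Rightarrow> real^'i \<Rightarrow> bool" where
  "nilpotent_curvature_at g P \<longleftrightarrow> (\<forall>x y. \<exists>k. (curvature g P x y ^^ k) = (\<lambda>_. 0))"

text \<open>Coordinates of V are indexed by 'n + 'n: Inl i is x^i (basis e_i), Inr i is x~^i (basis e~_i).\<close>
definition V_inner :: "real^('n::finite + 'n) \<Rightarrow> real^('n + 'n) \<Rightarrow> real" where
  "V_inner u v = (\<Sum>i\<in>UNIV. u $ Inl i * v $ Inr i + u $ Inr i * v $ Inl i)"

definition W_inner :: "(real^('n::finite + 'n)) \<times> real \<Rightarrow> (real^('n + 'n)) \<times> real \<Rightarrow> real" where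
  "W_inner w w' = V_inner (fst w) (fst w') + snd w * snd w'"

definition xtilde :: "real^('n::finite + 'n) \<Rightarrow> real^'n" where
  "xtilde v = (\<chi> i. v $ Inr i)"

definition graph_embedding :: "(real^'n::finite \<Rightarrow> real) \<Rightarrow> real^('n + 'n) \<Rightarrow> (real^('n + 'n)) \<times> real" where
  "graph_embedding f v = (v, f (xtilde v))"

definition induced_metric :: "(real^'n::finite \<Rightarrow> real) \<Rightarrow> ('n + 'n) metric" where
  "induced_metric f P u v =
     W_inner (frechet_derivative (graph_embedding f) (at P) u)
             (frechet_derivative (graph_embedding f) (at P) v)"

end

theory Submission
  imports Defs
begin


definition xp :: "real^('n::finite + 'n) \<Rightarrow> real^'n" where "xp v = (\<chi> i. v $ Inl i)"
definition pairV :: "real^'n::finite \<Rightarrow> real^'n \<Rightarrow> real^('n+'n)" where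
  "pairV x y = (\<chi> a. case a of Inl i \<Rightarrow> x $ i | Inr i \<Rightarrow> y $ i)"

lemma xp_pairV[simp]: "xp (pairV x y) = x"
  by (simp add: xp_def pairV_def vec_eq_iff)
lemma xtilde_pairV[simp]: "xtilde (pairV x y) = y"
  by (simp add: xtilde_def pairV_def vec_eq_iff)
lemma pairV_decomp: "pairV (xp v) (xtilde v) = v"
  by (simp add: xtilde_def xp_def pairV_def vec_eq_iff split: sum.split)
lemma pairV_eq_iff[simp]: "pairV a b = pairV c d \<longleftrightarrow> a = c \<and> b = d"
  by (metis xp_pairV xtilde_pairV)
lemma pairV_add: "pairV (a+b) (c+d) = pairV a c + pairV b d"
  by (simp add: pairV_def vec_eq_iff split: sum.split)
lemma pairV_diff: "pairV (a-b) (c-d) = pairV a c - pairV b d"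
  by (simp add: pairV_def vec_eq_iff split: sum.split)
lemma pairV_scaleR: "pairV (r *\<^sub>R a) (r *\<^sub>R b) = r *\<^sub>R pairV a b"
  by (simp add: pairV_def vec_eq_iff split: sum.split)
lemma pairV_zero[simp]: "pairV 0 0 = 0"
  by (simp add: pairV_def vec_eq_iff split: sum.split)
lemma pairV_eq_0[simp]: "pairV a b = 0 \<longleftrightarrow> a = 0 \<and> b = 0"
  by (metis pairV_eq_iff pairV_zero)

lemma xp_add: "xp (u + v) = xp u + xp v" by (simp add: xp_def vec_eq_iff)
lemma xp_scaleR: "xp (r *\<^sub>R u) = r *\<^sub>R xp u" by (simp add: xp_def vec_eq_iff)
lemma xtilde_add: "xtilde (u + v) = xtilde u + xtilde v" by (simp add: xtilde_def vec_eq_iff)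
lemma xtilde_scaleR: "xtilde (r *\<^sub>R u) = r *\<^sub>R xtilde u" by (simp add: xtilde_def vec_eq_iff)
lemma xtilde_zero[simp]: "xtilde 0 = 0" by (simp add: xtilde_def vec_eq_iff)
lemma xp_zero[simp]: "xp 0 = 0" by (simp add: xp_def vec_eq_iff)

lemma linear_xp: "linear xp"
  by (rule linearI) (simp_all add: xp_add xp_scaleR)
lemma linear_xtilde: "linear xtilde"
  by (rule linearI) (simp_all add: xtilde_add xtilde_scaleR)
lemma linear_pairV0: "linear (\<lambda>x. pairV x 0)"
  by (rule linearI) (metis add_0 pairV_add, metis pairV_scaleR scaleR_zero_right)
lemma linear_pairV: "linear (\<lambda>v. pairV (f v) (g v))" if "linear f" "linear g"
proof (rule linearI)
  fix x y show "pairV (f (x + y)) (g (x + y)) = pairV (f x) (g x) + pairV (f y) (g y)"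
    using that by (simp add: linear_add pairV_add)
next
  fix r x show "pairV (f (r *\<^sub>R x)) (g (r *\<^sub>R x)) = r *\<^sub>R pairV (f x) (g x)"
    using that by (simp add: linear_scale pairV_scaleR)
qed

lemma bounded_linear_xtilde: "bounded_linear xtilde"
  using linear_xtilde linear_conv_bounded_linear by blast

lemma sum_UNIV_sum:
  "(\<Sum>a\<in>(UNIV::('a::finite+'b::finite) set). F a) = (\<Sum>i\<in>UNIV. F (Inl i)) + (\<Sum>i\<in>UNIV. F (Inr i))"
  using sum.Plus[of "UNIV::'a set" "UNIV::'b set" F] by (simp add: comp_def)

lemma V_inner_eq: "V_inner u v = xp u \<bullet> xtilde v + xtilde u \<bullet> xp v"
  by (simp add: V_inner_def inner_vec_def xp_def xtilde_def sum.distrib)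

lemma xtilde_axis[simp]: "xtilde (axis (Inl i) 1) = 0" "xtilde (axis (Inr i) 1) = axis i 1"
  by (auto simp: xtilde_def axis_def vec_eq_iff)
lemma xp_axis[simp]: "xp (axis (Inl i) 1) = axis i 1" "xp (axis (Inr i) 1) = 0"
  by (auto simp: xp_def axis_def vec_eq_iff)

lemma pairV_component[simp]: "pairV x y $ Inl i = x $ i" "pairV x y $ Inr i = y $ i"
  by (simp_all add: pairV_def)

lemma lin_expand:
  fixes L :: "real^'n::finite \<Rightarrow> real"
  assumes "linear L" shows "L w = (\<Sum>k\<in>UNIV. w $ k * L (axis k 1))"
proof -
  have "L w = L (\<Sum>k\<in>UNIV. w $ k *\<^sub>R axis k 1)"
    using basis_expansion[of w] by (simp add: scalar_mult_eq_scaleR)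
  also have "\<dots> = (\<Sum>k\<in>UNIV. w $ k * L (axis k 1))"
    using assms by (simp add: linear_sum linear_scale)
  finally show ?thesis .
qed

definition indep2 :: "'a::real_vector \<Rightarrow> 'a \<Rightarrow> bool" where
  "indep2 a b \<longleftrightarrow> (\<forall>s t. s *\<^sub>R a + t *\<^sub>R b = 0 \<longrightarrow> s = 0 \<and> t = 0)"

lemma indep2_neq: "indep2 a b \<Longrightarrow> a \<noteq> b"
proof
  assume H: "indep2 a b" and "a = b"
  then have "1 *\<^sub>R a + (-1) *\<^sub>R b = 0" by simp
  from H[unfolded indep2_def, rule_format, OF this] show False by simp
qed

lemma X: "(b \<noteq> 0 \<and> (\<forall>k. a \<noteq> k *\<^sub>R b)) \<longleftrightarrow> indep2 a b"
proof
  assume A: "b \<noteq> 0 \<and> (\<forall>k. a \<noteq> k *\<^sub>R b)"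
  show "indep2 a b" unfolding indep2_def
  proof (intro allI impI)
    fix s t assume e: "s *\<^sub>R a + t *\<^sub>R b = 0"
    have s0: "s = 0"
    proof (rule ccontr)
      assume "s \<noteq> 0"
      have "s *\<^sub>R a = - (t *\<^sub>R b)" using e by (simp add: eq_neg_iff_add_eq_0)
      then have "(1/s) *\<^sub>R (s *\<^sub>R a) = (1/s) *\<^sub>R (- (t *\<^sub>R b))" by simp
      then have "a = (- t / s) *\<^sub>R b" using \<open>s \<noteq> 0\<close> by simp
      then show False using A by blast
    qed
    then show "s = 0 \<and> t = 0" using e A by simp
  qed
next
  assume H: "indep2 a b"
  show "b \<noteq> 0 \<and> (\<forall>k. a \<noteq> k *\<^sub>R b)"
  proof (intro conjI allI notI)
    assume "b = 0"
    then have "0 *\<^sub>R a + 1 *\<^sub>R b = 0" by simp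
    from H[unfolded indep2_def, rule_format, OF this] show False by simp
  next
    fix k assume "a = k *\<^sub>R b"
    then have "1 *\<^sub>R a + (-k) *\<^sub>R b = 0" by simp
    from H[unfolded indep2_def, rule_format, OF this] show False by simp
  qed
qed

lemma indep2_iff: "a \<noteq> b \<Longrightarrow> independent {a, b} \<longleftrightarrow> indep2 a b"
proof -
  assume ab: "a \<noteq> b"
  have "independent {a, b} \<longleftrightarrow> independent {b} \<and> a \<notin> span {b}"
    using ab by (simp add: independent_insert)
  moreover have "independent {b} \<longleftrightarrow> b \<noteq> 0" by (simp add: independent_insert)
  moreover have "a \<in> span {b} \<longleftrightarrow> (\<exists>k. a = k *\<^sub>R b)" by (auto simp: span_singleton)
  ultimately show ?thesis using X[of b a] by blast
qed

lemma indep2_linear_inj: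
  assumes "linear L" "inj L" "indep2 a b" shows "indep2 (L a) (L b)"
  unfolding indep2_def
proof (intro allI impI)
  fix s t assume e: "s *\<^sub>R L a + t *\<^sub>R L b = 0"
  have "L (s *\<^sub>R a + t *\<^sub>R b) = L 0"
    using e assms(1) by (simp add: linear_add linear_scale linear_0)
  then have "s *\<^sub>R a + t *\<^sub>R b = 0" using assms(2) by (meson injD)
  then show "s = 0 \<and> t = 0" using assms(3) unfolding indep2_def by blast
qed



lemma frechet_local:
  assumes "open T" "x \<in> T" "\<And>y. y \<in> T \<Longrightarrow> \<phi> y = \<psi> y"
  shows "frechet_derivative \<phi> (at x) = frechet_derivative \<psi> (at x)"
proof -
  have "\<And>D. (\<phi> has_derivative D) (at x) \<longleftrightarrow> (\<psi> has_derivative D) (at x)"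
  proof
    fix D assume "(\<phi> has_derivative D) (at x)"
    then show "(\<psi> has_derivative D) (at x)"
      using has_derivative_transform_within_open[of \<phi> D x UNIV T \<psi>] assms by simp
  next
    fix D assume "(\<psi> has_derivative D) (at x)"
    then show "(\<phi> has_derivative D) (at x)"
      using has_derivative_transform_within_open[of \<psi> D x UNIV T \<phi>] assms by simp
  qed
  then show ?thesis unfolding frechet_derivative_def by simp
qed

lemma partial_local:
  assumes "open T" "x \<in> T" "\<And>y. y \<in> T \<Longrightarrow> \<phi> y = \<psi> y"
  shows "partial k \<phi> x = partial k \<psi> x"
  unfolding partial_def using frechet_local[OF assms] by simp

lemma partial_has_deriv:
  fixes \<phi> :: "real^'n::finite \<Rightarrow> real"
  assumes "\<phi> differentiable at q"
  shows "(\<phi> has_derivative (\<lambda>w. \<Sum>k\<in>UNIV. w$k * partial k \<phi> q)) (at q)"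
proof -
  have 1: "(\<phi> has_derivative frechet_derivative \<phi> (at q)) (at q)"
    using assms frechet_derivative_works by blast
  have "linear (frechet_derivative \<phi> (at q))"
    using assms linear_frechet_derivative by blast
  then have "frechet_derivative \<phi> (at q) = (\<lambda>w. \<Sum>k\<in>UNIV. w$k * partial k \<phi> q)"
    unfolding partial_def by (intro ext lin_expand)
  with 1 show ?thesis by simp
qed

lemma partial_at:
  assumes "(\<phi> has_derivative D) (at q)" shows "partial k \<phi> q = D (axis k 1)"
  unfolding partial_def using frechet_derivative_at[OF assms] by simp

lemma diff_at_S: "open S \<Longrightarrow> \<phi> differentiable_on S \<Longrightarrow> q \<in> S \<Longrightarrow> \<phi> differentiable at q"
  using differentiable_on_eq_differentiable_at by blast

lemma line_deriv:
  fixes \<phi> :: "'a::real_normed_vector \<Rightarrow> real"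
  assumes "\<phi> differentiable at (a + s *\<^sub>R e)"
  shows "((\<lambda>s. \<phi> (a + s *\<^sub>R e)) has_derivative (\<lambda>h. h * frechet_derivative \<phi> (at (a + s *\<^sub>R e)) e)) (at s within X)"
proof -
  have l: "((\<lambda>s. a + s *\<^sub>R e) has_derivative (\<lambda>h. h *\<^sub>R e)) (at s within X)"
    by (auto intro!: derivative_eq_intros)
  have d: "(\<phi> has_derivative frechet_derivative \<phi> (at (a + s *\<^sub>R e))) (at (a + s *\<^sub>R e))"
    using assms frechet_derivative_works by blast
  have lin: "linear (frechet_derivative \<phi> (at (a + s *\<^sub>R e)))"
    using assms linear_frechet_derivative by blast
  have "((\<lambda>s. \<phi> (a + s *\<^sub>R e)) has_derivative (\<lambda>h. frechet_derivative \<phi> (at (a + s *\<^sub>R e)) (h *\<^sub>R e))) (at s within X)"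
    using has_derivative_compose[OF l d] by simp
  moreover have "\<And>h. frechet_derivative \<phi> (at (a + s *\<^sub>R e)) (h *\<^sub>R e) = h * frechet_derivative \<phi> (at (a + s *\<^sub>R e)) e"
    using lin by (simp add: linear_scale)
  ultimately show ?thesis by simp
qed

lemma norm_two_axes:
  fixes s t :: real
  assumes "0 \<le> s" "s \<le> t" "0 \<le> r" "r \<le> t"
  shows "norm (s *\<^sub>R axis i (1::real) + r *\<^sub>R (axis j 1 :: real^'n::finite)) \<le> 2 * t"
proof -
  have "norm (s *\<^sub>R axis i (1::real) + r *\<^sub>R (axis j 1 :: real^'n)) \<le> norm (s *\<^sub>R axis i (1::real) :: real^'n) + norm (r *\<^sub>R (axis j 1 :: real^'n))"
    by (rule norm_triangle_ineq)
  also have "\<dots> = s + r" using assms by simp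
  finally show ?thesis using assms by simp
qed

lemma delta_mvt:
  fixes \<phi> :: "real^'n::finite \<Rightarrow> real"
  assumes S: "open S" "cball q (2*t) \<subseteq> S" and t: "0 < t"
   and d0: "\<phi> differentiable_on S"
   and di: "partial i \<phi> differentiable_on S"
  shows "\<exists>\<xi>\<in>cball q (2*t). \<phi> (q + t *\<^sub>R axis i 1 + t *\<^sub>R axis j 1) - \<phi> (q + t *\<^sub>R axis i 1)
      - \<phi> (q + t *\<^sub>R axis j 1) + \<phi> q = t^2 * partial j (partial i \<phi>) \<xi>"
proof -
  define ei :: "real^'n" where "ei = axis i 1"
  define ej :: "real^'n" where "ej = axis j 1"
  have inS: "q + s *\<^sub>R ei + r *\<^sub>R ej \<in> S" if "0 \<le> s" "s \<le> t" "0 \<le> r" "r \<le> t" for s r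
  proof -
    have "dist q (q + s *\<^sub>R ei + r *\<^sub>R ej) = norm (s *\<^sub>R ei + r *\<^sub>R ej)"
      by (simp add: dist_norm norm_minus_commute add.assoc add.commute)
    then have "dist q (q + s *\<^sub>R ei + r *\<^sub>R ej) \<le> 2 * t"
      using norm_two_axes[OF that, of i j] by (simp add: ei_def ej_def)
    then show ?thesis using S by auto
  qed
  define \<psi> where "\<psi> s = \<phi> (q + t *\<^sub>R ej + s *\<^sub>R ei) - \<phi> (q + s *\<^sub>R ei)" for s
  have dpsi: "(\<psi> has_derivative (\<lambda>h. h * (partial i \<phi> (q + t *\<^sub>R ej + s *\<^sub>R ei) - partial i \<phi> (q + s *\<^sub>R ei)))) (at s within {0..t})"
    if "0 \<le> s" "s \<le> t" for s
  proof -
    have p1: "q + t *\<^sub>R ej + s *\<^sub>R ei \<in> S" using inS[of s t] that t by (simp add: add_ac)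
    have p2: "q + s *\<^sub>R ei \<in> S" using inS[of s 0] that t by simp
    have "((\<lambda>s. \<phi> (q + t *\<^sub>R ej + s *\<^sub>R ei)) has_derivative (\<lambda>h. h * partial i \<phi> (q + t *\<^sub>R ej + s *\<^sub>R ei))) (at s within {0..t})"
      using line_deriv[of \<phi> "q + t *\<^sub>R ej" s ei "{0..t}"] diff_at_S[OF S(1) d0 p1]
      unfolding partial_def ei_def by simp
    moreover have "((\<lambda>s. \<phi> (q + s *\<^sub>R ei)) has_derivative (\<lambda>h. h * partial i \<phi> (q + s *\<^sub>R ei))) (at s within {0..t})"
      using line_deriv[of \<phi> q s ei "{0..t}"] diff_at_S[OF S(1) d0 p2]
      unfolding partial_def ei_def by simp
    ultimately show ?thesis unfolding \<psi>_def
      by (auto intro!: derivative_eq_intros simp: right_diff_distrib)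
  qed
  obtain \<sigma> where \<sigma>: "\<sigma> \<in> {0..t}" "\<psi> t - \<psi> 0 = (t - 0) * (partial i \<phi> (q + t *\<^sub>R ej + \<sigma> *\<^sub>R ei) - partial i \<phi> (q + \<sigma> *\<^sub>R ei))"
    using mvt_very_simple[of 0 t \<psi>, OF _ dpsi] t by force
  define \<rho> where "\<rho> r = partial i \<phi> (q + \<sigma> *\<^sub>R ei + r *\<^sub>R ej)" for r
  have drho: "(\<rho> has_derivative (\<lambda>h. h * partial j (partial i \<phi>) (q + \<sigma> *\<^sub>R ei + r *\<^sub>R ej))) (at r within {0..t})"
    if "0 \<le> r" "r \<le> t" for r
  proof -
    have p: "q + \<sigma> *\<^sub>R ei + r *\<^sub>R ej \<in> S" using inS[of \<sigma> r] that \<sigma> by simp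
    show ?thesis
      using line_deriv[of "partial i \<phi>" "q + \<sigma> *\<^sub>R ei" r ej "{0..t}"] diff_at_S[OF S(1) di p]
      unfolding \<rho>_def by (simp add: partial_def ej_def)
  qed
  obtain \<tau> where \<tau>: "\<tau> \<in> {0..t}" "\<rho> t - \<rho> 0 = (t - 0) * partial j (partial i \<phi>) (q + \<sigma> *\<^sub>R ei + \<tau> *\<^sub>R ej)"
    using mvt_very_simple[of 0 t \<rho>, OF _ drho] t by force
  define \<xi> where "\<xi> = q + \<sigma> *\<^sub>R ei + \<tau> *\<^sub>R ej"
  have "dist q \<xi> = norm (\<sigma> *\<^sub>R ei + \<tau> *\<^sub>R ej)"
    by (simp add: \<xi>_def dist_norm norm_minus_commute algebra_simps)
  then have "\<xi> \<in> cball q (2*t)"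
    using norm_two_axes[of \<sigma> t \<tau> i j] \<sigma> \<tau> by (simp add: ei_def ej_def)
  moreover have "\<phi> (q + t *\<^sub>R ei + t *\<^sub>R ej) - \<phi> (q + t *\<^sub>R ei) - \<phi> (q + t *\<^sub>R ej) + \<phi> q = t^2 * partial j (partial i \<phi>) \<xi>"
  proof -
    have "\<phi> (q + t *\<^sub>R ei + t *\<^sub>R ej) - \<phi> (q + t *\<^sub>R ei) - \<phi> (q + t *\<^sub>R ej) + \<phi> q = \<psi> t - \<psi> 0"
      by (simp add: \<psi>_def add_ac)
    also have "\<dots> = t * (\<rho> t - \<rho> 0)" using \<sigma>(2) by (simp add: \<rho>_def add_ac)
    also have "\<dots> = t^2 * partial j (partial i \<phi>) \<xi>" using \<tau>(2) by (simp add: \<xi>_def power2_eq_square)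
    finally show ?thesis .
  qed
  ultimately show ?thesis unfolding ei_def ej_def by blast
qed

lemma schwarz:
  fixes \<phi> :: "real^'n::finite \<Rightarrow> real"
  assumes S: "open S" "q \<in> S"
   and d0: "\<phi> differentiable_on S"
   and di: "partial i \<phi> differentiable_on S" and dj: "partial j \<phi> differentiable_on S"
   and ci: "continuous_on S (partial j (partial i \<phi>))" and cj: "continuous_on S (partial i (partial j \<phi>))"
  shows "partial i (partial j \<phi>) q = partial j (partial i \<phi>) q"
proof (rule ccontr)
  let ?F = "partial j (partial i \<phi>)" and ?G = "partial i (partial j \<phi>)"
  assume ne: "?G q \<noteq> ?F q"
  define e where "e = \<bar>?G q - ?F q\<bar> / 2"
  have e: "e > 0" using ne by (simp add: e_def)
  have cF: "continuous (at q) ?F" using ci S continuous_on_eq_continuous_at by blast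
  have cG: "continuous (at q) ?G" using cj S continuous_on_eq_continuous_at by blast
  obtain d1 where d1: "d1 > 0" "\<And>y. dist y q < d1 \<Longrightarrow> dist (?F y) (?F q) < e"
    using cF e unfolding continuous_at_eps_delta by blast
  obtain d2 where d2: "d2 > 0" "\<And>y. dist y q < d2 \<Longrightarrow> dist (?G y) (?G q) < e"
    using cG e unfolding continuous_at_eps_delta by blast
  obtain r where r: "r > 0" "ball q r \<subseteq> S" using S openE by blast
  define t where "t = min (min d1 d2) r / 4"
  have t: "t > 0" using d1 d2 r by (simp add: t_def)
  have cb: "cball q (2*t) \<subseteq> S"
  proof -
    have "2 * t < r" using t r by (simp add: t_def)
    then have "cball q (2*t) \<subseteq> ball q r" by (simp add: cball_subset_ball_iff)
    then show ?thesis using r by blast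
  qed
  obtain \<xi> where \<xi>: "\<xi> \<in> cball q (2*t)" "\<phi> (q + t *\<^sub>R axis i 1 + t *\<^sub>R axis j 1) - \<phi> (q + t *\<^sub>R axis i 1)
      - \<phi> (q + t *\<^sub>R axis j 1) + \<phi> q = t^2 * ?F \<xi>"
    using delta_mvt[OF S(1) cb t d0 di] by blast
  obtain \<eta> where \<eta>: "\<eta> \<in> cball q (2*t)" "\<phi> (q + t *\<^sub>R axis j 1 + t *\<^sub>R axis i 1) - \<phi> (q + t *\<^sub>R axis j 1)
      - \<phi> (q + t *\<^sub>R axis i 1) + \<phi> q = t^2 * ?G \<eta>"
    using delta_mvt[OF S(1) cb t d0 dj, of i] by blast
  have sw: "q + t *\<^sub>R axis j 1 + t *\<^sub>R axis i 1 = q + t *\<^sub>R axis i 1 + t *\<^sub>R axis j 1"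
    by (simp add: add_ac)
  have "t^2 * ?F \<xi> = t^2 * ?G \<eta>" using \<xi>(2) \<eta>(2) unfolding sw by linarith
  then have FG: "?F \<xi> = ?G \<eta>" using t by simp
  have "2 * t < d1" "2 * t < d2" using t d1 d2 r by (auto simp: t_def)
  then have "dist \<xi> q < d1" "dist \<eta> q < d2" using \<xi>(1) \<eta>(1) by (auto simp: dist_commute)
  then have "dist (?F \<xi>) (?F q) < e" "dist (?G \<eta>) (?G q) < e" using d1 d2 by blast+
  then have "\<bar>?G q - ?F q\<bar> < 2 * e" using FG by (simp add: dist_real_def)
  then show False by (simp add: e_def)
qed



lemma vec_has_derivative:
  fixes F :: "'a::real_normed_vector \<Rightarrow> real^'m::finite"
  assumes "\<And>k. ((\<lambda>x. F x $ k) has_derivative (\<lambda>h. F' h $ k)) (at a within T)"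
  shows "(F has_derivative F') (at a within T)"
proof (subst has_derivative_componentwise_within, intro ballI)
  fix b :: "real^'m" assume "b \<in> Basis"
  then obtain k where b: "b = axis k 1" unfolding Basis_vec_def by auto
  show "((\<lambda>x. F x \<bullet> b) has_derivative (\<lambda>x. F' x \<bullet> b)) (at a within T)"
    using assms[of k] unfolding b by (simp add: inner_axis)
qed

lemma inner_axis_r[simp]: "(x::real^'n::finite) \<bullet> axis i 1 = x $ i"
  by (simp add: inner_axis)
lemma inner_axis_l[simp]: "axis i 1 \<bullet> (x::real^'n::finite) = x $ i"
  by (simp add: inner_axis')

lemma matrix_inv_eq:
  fixes G B :: "real^'m::finite^'m"
  assumes "G ** B = mat 1" "B ** G = mat 1"
  shows "matrix_inv G = B"
proof -
  have ex: "\<exists>A'. G ** A' = mat 1 \<and> A' ** G = mat 1" using assms by blast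
  define A' where "A' = matrix_inv G"
  have A': "G ** A' = mat 1 \<and> A' ** G = mat 1"
    unfolding A'_def matrix_inv_def using someI_ex[OF ex] .
  have "A' = A' ** (G ** B)" using assms by simp
  also have "\<dots> = (A' ** G) ** B" by (simp add: matrix_mul_assoc)
  also have "\<dots> = B" using A' by simp
  finally show ?thesis unfolding A'_def .
qed

definition hv :: "(real^'n::finite \<Rightarrow> real) \<Rightarrow> real^'n \<Rightarrow> real^'n" where
  "hv f q = (\<chi> k. partial k f q)"
definition Hm :: "(real^'n::finite \<Rightarrow> real) \<Rightarrow> real^'n \<Rightarrow> real^'n^'n" where
  "Hm f q = (\<chi> k l. partial k (partial l f) q)"

lemma open_U0: "open S \<Longrightarrow> open (xtilde -` S)"
  by (rule continuous_open_vimage) (auto intro: linear_continuous_at bounded_linear_xtilde)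

lemma ifmult1[simp]: "(if P then 1 else 0) * (x::real) = (if P then x else 0)" by simp
lemma ifmult2[simp]: "(x::real) * (if P then 1 else 0) = (if P then x else 0)" by simp

definition Gm :: "real^'n::finite \<Rightarrow> real^('n+'n)^('n+'n)" where
  "Gm h = (\<chi> a b. case a of Inl i \<Rightarrow> (case b of Inl j \<Rightarrow> 0 | Inr j \<Rightarrow> (if i = j then 1 else 0))
                           | Inr i \<Rightarrow> (case b of Inl j \<Rightarrow> (if i = j then 1 else 0) | Inr j \<Rightarrow> h$i * h$j))"
definition Ginv :: "real^'n::finite \<Rightarrow> real^('n+'n)^('n+'n)" where
  "Ginv h = (\<chi> a b. case a of Inl i \<Rightarrow> (case b of Inl j \<Rightarrow> - (h$i * h$j) | Inr j \<Rightarrow> (if i = j then 1 else 0))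
                           | Inr i \<Rightarrow> (case b of Inl j \<Rightarrow> (if i = j then 1 else 0) | Inr j \<Rightarrow> 0))"

lemma Gm_Ginv: "Gm h ** Ginv h = mat 1"
proof -
  have "(Gm h ** Ginv h) $ a $ b = mat 1 $ a $ b" for a b
    by (cases a; cases b) (simp_all add: matrix_matrix_mult_def mat_def sum_UNIV_sum Gm_def Ginv_def sum_negf)
  then show ?thesis by (simp add: vec_eq_iff)
qed

lemma Ginv_Gm: "Ginv h ** Gm h = mat 1"
proof -
  have "(Ginv h ** Gm h) $ a $ b = mat 1 $ a $ b" for a b
    by (cases a; cases b) (simp_all add: matrix_matrix_mult_def mat_def sum_UNIV_sum Gm_def Ginv_def sum_negf)
  then show ?thesis by (simp add: vec_eq_iff)
qed


definition Gam :: "('i::finite) metric \<Rightarrow> real^'i \<Rightarrow> real^'i \<Rightarrow> real^'i \<Rightarrow> real^'i" where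
  "Gam g P x y = (\<chi> k. \<Sum>i\<in>UNIV. \<Sum>j\<in>UNIV. christoffel g P k i j * x $ i * y $ j)"

lemma cov_deriv_const: "cov_deriv g (\<lambda>_. x) W P = frechet_derivative W (at P) x + Gam g P x (W P)"
  by (simp add: cov_deriv_def Gam_def)

definition Ds :: "(real^'n::finite \<Rightarrow> real) \<Rightarrow> real^'n \<Rightarrow> real^'n \<Rightarrow> real^'n \<Rightarrow> real^'n \<Rightarrow> real" where
  "Ds f q y z w = (\<Sum>k\<in>UNIV. \<Sum>l\<in>UNIV. (\<Sum>m\<in>UNIV. w$m * partial m (partial k (partial l f)) q) * y$l * z$k)"

lemma axis_nth_real: "axis j (1::real) $ i = (if i = j then 1 else 0)"
  by (simp add: axis_def)

lemma Hm_axis: "(H *v axis i 1) $ j = (H::real^'n::finite^'n) $ j $ i"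
  by (simp add: matrix_vector_mult_basis column_def)

context
  fixes f :: "real^'n::finite \<Rightarrow> real" and S :: "(real^'n) set"
  assumes S_open: "open S" and smooth: "smooth_on S f"
begin

lemma sm: "iter_partial ks f differentiable_on S"
  using smooth unfolding smooth_on_def by blast

lemma d0: "f differentiable_on S" using sm[of "[]"] by simp
lemma d1: "partial k f differentiable_on S" using sm[of "[k]"] by simp
lemma d2: "partial k (partial l f) differentiable_on S" using sm[of "[k,l]"] by simp
lemma d3: "partial m (partial k (partial l f)) differentiable_on S" using sm[of "[m,k,l]"] by simp

lemma c2: "continuous_on S (partial k (partial l f))" using d2 differentiable_imp_continuous_on by blast
lemma c3: "continuous_on S (partial m (partial k (partial l f)))" using d3 differentiable_imp_continuous_on by blast

lemma sym2: "q \<in> S \<Longrightarrow> partial k (partial l f) q = partial l (partial k f) q"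
  using schwarz[OF S_open _ d0 d1 d1 c2 c2] by blast

lemma sym3: "q \<in> S \<Longrightarrow> partial m (partial k (partial l f)) q = partial l (partial k (partial m f)) q"
proof -
  assume q: "q \<in> S"
  have "partial m (partial k (partial l f)) q = partial m (partial l (partial k f)) q"
    by (rule partial_local[OF S_open q]) (simp add: sym2)
  also have "\<dots> = partial l (partial m (partial k f)) q"
    using schwarz[OF S_open q d1 d2 d2 c3 c3] by blast
  also have "\<dots> = partial l (partial k (partial m f)) q"
    by (rule partial_local[OF S_open q]) (simp add: sym2)
  finally show ?thesis .
qed

lemma Hm_sym: "q \<in> S \<Longrightarrow> (Hm f q *v x) \<bullet> y = (Hm f q *v y) \<bullet> x"
proof -
  assume q: "q \<in> S"
  have "(Hm f q *v x) \<bullet> y = (\<Sum>k\<in>UNIV. \<Sum>l\<in>UNIV. partial k (partial l f) q * x $ l * y $ k)"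
    by (simp add: inner_vec_def matrix_vector_mult_def Hm_def sum_distrib_right)
  also have "\<dots> = (\<Sum>k\<in>UNIV. \<Sum>l\<in>UNIV. partial l (partial k f) q * x $ k * y $ l)"
    by (rule sum.swap)
  also have "\<dots> = (\<Sum>k\<in>UNIV. \<Sum>l\<in>UNIV. partial k (partial l f) q * x $ k * y $ l)"
    using sym2[OF q] by (intro sum.cong refl) metis
  also have "\<dots> = (Hm f q *v y) \<bullet> x"
    by (simp add: inner_vec_def matrix_vector_mult_def Hm_def sum_distrib_left mult_ac)
  finally show ?thesis .
qed

lemma hv_deriv: "q \<in> S \<Longrightarrow> (hv f has_derivative (\<lambda>w. Hm f q *v w)) (at q)"
proof -
  assume q: "q \<in> S"
  show ?thesis
  proof (rule vec_has_derivative)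
    fix k
    have "(partial k f has_derivative (\<lambda>w. \<Sum>l\<in>UNIV. w$l * partial l (partial k f) q)) (at q)"
      using partial_has_deriv diff_at_S[OF S_open d1 q] by blast
    moreover have "(\<lambda>w. \<Sum>l\<in>UNIV. w$l * partial l (partial k f) q) = (\<lambda>w. (Hm f q *v w) $ k)"
      using sym2[OF q] by (simp add: matrix_vector_mult_def Hm_def mult_ac)
    ultimately show "((\<lambda>x. hv f x $ k) has_derivative (\<lambda>h. (Hm f q *v h) $ k)) (at q)"
      by (simp add: hv_def)
  qed
qed

lemma f_deriv: "q \<in> S \<Longrightarrow> (f has_derivative (\<lambda>w. hv f q \<bullet> w)) (at q)"
proof -
  assume q: "q \<in> S"
  have "(f has_derivative (\<lambda>w. \<Sum>k\<in>UNIV. w$k * partial k f q)) (at q)"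
    using partial_has_deriv diff_at_S[OF S_open d0 q] by blast
  moreover have "(\<lambda>w. \<Sum>k\<in>UNIV. w$k * partial k f q) = (\<lambda>w. hv f q \<bullet> w)"
    by (simp add: inner_vec_def hv_def mult_ac)
  ultimately show ?thesis by simp
qed

lemma g_formula:
  assumes Q: "xtilde Q \<in> S"
  shows "induced_metric f Q u v = xp u \<bullet> xtilde v + xtilde u \<bullet> xp v
           + (hv f (xtilde Q) \<bullet> xtilde u) * (hv f (xtilde Q) \<bullet> xtilde v)"
proof -
  have lx: "(xtilde has_derivative xtilde) (at Q)"
    using bounded_linear_xtilde bounded_linear_imp_has_derivative by blast
  have "((\<lambda>v. f (xtilde v)) has_derivative (\<lambda>u. hv f (xtilde Q) \<bullet> xtilde u)) (at Q)"
    using has_derivative_compose[OF lx f_deriv[OF Q]] .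
  then have "(graph_embedding f has_derivative (\<lambda>u. (u, hv f (xtilde Q) \<bullet> xtilde u))) (at Q)"
    unfolding graph_embedding_def[abs_def]
    by (intro has_derivative_Pair has_derivative_ident)
  then have "frechet_derivative (graph_embedding f) (at Q) = (\<lambda>u. (u, hv f (xtilde Q) \<bullet> xtilde u))"
    using frechet_derivative_at by metis
  then show ?thesis
    by (simp add: induced_metric_def W_inner_def V_inner_eq)
qed


lemma hvx_deriv:
  assumes Q: "xtilde Q \<in> S"
  shows "((\<lambda>Q. hv f (xtilde Q)) has_derivative (\<lambda>u. Hm f (xtilde Q) *v xtilde u)) (at Q)"
proof -
  have lx: "(xtilde has_derivative xtilde) (at Q)"
    using bounded_linear_xtilde bounded_linear_imp_has_derivative by blast
  show ?thesis using has_derivative_compose[OF lx hv_deriv[OF Q]] .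
qed

lemma entry_deriv:
  assumes Q: "xtilde Q \<in> S"
  shows "((\<lambda>Q. induced_metric f Q (axis a 1) (axis b 1)) has_derivative
    (\<lambda>u. ((Hm f (xtilde Q) *v xtilde u) \<bullet> xtilde (axis a 1)) * (hv f (xtilde Q) \<bullet> xtilde (axis b 1))
       + (hv f (xtilde Q) \<bullet> xtilde (axis a 1)) * ((Hm f (xtilde Q) *v xtilde u) \<bullet> xtilde (axis b 1)))) (at Q)"
proof -
  let ?A = "xtilde (axis a 1 :: real^('n+'n))" and ?B = "xtilde (axis b 1 :: real^('n+'n))"
  let ?c = "xp (axis a 1 :: real^('n+'n)) \<bullet> ?B + ?A \<bullet> xp (axis b 1 :: real^('n+'n))"
  have i1: "((\<lambda>Q. hv f (xtilde Q) \<bullet> ?A) has_derivative (\<lambda>u. (Hm f (xtilde Q) *v xtilde u) \<bullet> ?A)) (at Q)"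
    using has_derivative_inner[OF hvx_deriv[OF Q] has_derivative_const[of ?A]] by simp
  have i2: "((\<lambda>Q. hv f (xtilde Q) \<bullet> ?B) has_derivative (\<lambda>u. (Hm f (xtilde Q) *v xtilde u) \<bullet> ?B)) (at Q)"
    using has_derivative_inner[OF hvx_deriv[OF Q] has_derivative_const[of ?B]] by simp
  have "((\<lambda>Q. ?c + (hv f (xtilde Q) \<bullet> ?A) * (hv f (xtilde Q) \<bullet> ?B)) has_derivative
     (\<lambda>u. 0 + ((hv f (xtilde Q) \<bullet> ?A) * ((Hm f (xtilde Q) *v xtilde u) \<bullet> ?B) + ((Hm f (xtilde Q) *v xtilde u) \<bullet> ?A) * (hv f (xtilde Q) \<bullet> ?B)))) (at Q)"
    by (rule has_derivative_add[OF has_derivative_const has_derivative_mult[OF i1 i2]])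
  then have d: "((\<lambda>Q. ?c + (hv f (xtilde Q) \<bullet> ?A) * (hv f (xtilde Q) \<bullet> ?B)) has_derivative
    (\<lambda>u. ((Hm f (xtilde Q) *v xtilde u) \<bullet> ?A) * (hv f (xtilde Q) \<bullet> ?B)
       + (hv f (xtilde Q) \<bullet> ?A) * ((Hm f (xtilde Q) *v xtilde u) \<bullet> ?B))) (at Q)"
    by (simp add: algebra_simps)
  show ?thesis
    by (rule has_derivative_transform_within_open[OF d open_U0[OF S_open]]) (use Q g_formula in auto)
qed

lemma entry_partial:
  assumes Q: "xtilde Q \<in> S"
  shows "partial c (\<lambda>Q. induced_metric f Q (axis a 1) (axis b 1)) Q =
     ((Hm f (xtilde Q) *v xtilde (axis c 1)) \<bullet> xtilde (axis a 1)) * (hv f (xtilde Q) \<bullet> xtilde (axis b 1))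
       + (hv f (xtilde Q) \<bullet> xtilde (axis a 1)) * ((Hm f (xtilde Q) *v xtilde (axis c 1)) \<bullet> xtilde (axis b 1))"
  using partial_at[OF entry_deriv[OF Q]] .


lemma metric_matrix_formula:
  assumes Q: "xtilde Q \<in> S"
  shows "metric_matrix (induced_metric f) Q = Gm (hv f (xtilde Q))"
proof -
  have "metric_matrix (induced_metric f) Q $ a $ b = Gm (hv f (xtilde Q)) $ a $ b" for a b
    by (cases a; cases b) (simp_all add: metric_matrix_def g_formula[OF Q] Gm_def axis_nth_real hv_def)
  then show ?thesis by (simp add: vec_eq_iff)
qed

lemma christoffel_formula:
  assumes Q: "xtilde Q \<in> S"
  shows "christoffel (induced_metric f) Q k a b =
     ((Hm f (xtilde Q) *v xtilde (axis a 1)) \<bullet> xtilde (axis b 1)) * (pairV (hv f (xtilde Q)) 0 $ k)"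
proof -
  let ?q = "xtilde Q"
  let ?h = "hv f ?q" and ?H = "Hm f ?q"
  let ?g = "induced_metric f"
  define A where "A = xtilde (axis a 1 :: real^('n+'n))"
  define B where "B = xtilde (axis b 1 :: real^('n+'n))"
  have mi: "matrix_inv (metric_matrix ?g Q) = Ginv ?h"
    using metric_matrix_formula[OF Q] matrix_inv_eq Gm_Ginv Ginv_Gm by metis
  have br: "partial a (\<lambda>Q. ?g Q (axis b 1) (axis l 1)) Q + partial b (\<lambda>Q. ?g Q (axis a 1) (axis l 1)) Q
      - partial l (\<lambda>Q. ?g Q (axis a 1) (axis b 1)) Q = 2 * ((?H *v A) \<bullet> B) * (?h \<bullet> xtilde (axis l 1))" for l
  proof -
    define L where "L = xtilde (axis l 1 :: real^('n+'n))"
    have s1: "(?H *v B) \<bullet> A = (?H *v A) \<bullet> B" using Hm_sym[OF Q] by metis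
    have s2: "(?H *v L) \<bullet> A = (?H *v A) \<bullet> L" using Hm_sym[OF Q] by metis
    have s3: "(?H *v L) \<bullet> B = (?H *v B) \<bullet> L" using Hm_sym[OF Q] by metis
    show ?thesis
      unfolding entry_partial[OF Q] A_def[symmetric] B_def[symmetric] L_def[symmetric] s1 s2 s3
      by (simp add: algebra_simps)
  qed
  have sl: "(\<Sum>l\<in>UNIV. Ginv ?h $ k $ l * (?h \<bullet> xtilde (axis l 1))) = pairV ?h 0 $ k"
    by (cases k) (simp_all add: sum_UNIV_sum Ginv_def)
  have "christoffel ?g Q k a b = (1/2) * (\<Sum>l\<in>UNIV. Ginv ?h $ k $ l * (2 * ((?H *v A) \<bullet> B) * (?h \<bullet> xtilde (axis l 1))))"
    unfolding christoffel_def mi br by simp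
  also have "\<dots> = ((?H *v A) \<bullet> B) * (\<Sum>l\<in>UNIV. Ginv ?h $ k $ l * (?h \<bullet> xtilde (axis l 1)))"
    by (simp add: sum_distrib_left sum_distrib_right mult_ac)
  finally show ?thesis unfolding sl A_def B_def .
qed

lemma Gam_formula:
  assumes Q: "xtilde Q \<in> S"
  shows "Gam (induced_metric f) Q y z = ((Hm f (xtilde Q) *v xtilde y) \<bullet> xtilde z) *\<^sub>R pairV (hv f (xtilde Q)) 0"
proof -
  let ?H = "Hm f (xtilde Q)"
  have key: "(\<Sum>a\<in>UNIV. \<Sum>b\<in>UNIV. ((?H *v xtilde (axis a 1)) \<bullet> xtilde (axis b 1)) * y $ a * z $ b) = (?H *v xtilde y) \<bullet> xtilde z"
  proof -
    have "(\<Sum>a\<in>UNIV. \<Sum>b\<in>UNIV. ((?H *v xtilde (axis a 1)) \<bullet> xtilde (axis b 1)) * y $ a * z $ b)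
        = (\<Sum>i\<in>UNIV. \<Sum>j\<in>UNIV. ?H $ j $ i * y $ Inr i * z $ Inr j)"
      by (simp add: sum_UNIV_sum Hm_axis)
    also have "\<dots> = (\<Sum>j\<in>UNIV. \<Sum>i\<in>UNIV. ?H $ j $ i * y $ Inr i * z $ Inr j)"
      by (rule sum.swap)
    also have "\<dots> = (?H *v xtilde y) \<bullet> xtilde z"
      by (simp add: inner_vec_def matrix_vector_mult_def xtilde_def sum_distrib_right)
    finally show ?thesis .
  qed
  have "Gam (induced_metric f) Q y z $ k = (((?H *v xtilde y) \<bullet> xtilde z) *\<^sub>R pairV (hv f (xtilde Q)) 0) $ k" for k
  proof -
    have "Gam (induced_metric f) Q y z $ k = (\<Sum>a\<in>UNIV. \<Sum>b\<in>UNIV. ((?H *v xtilde (axis a 1)) \<bullet> xtilde (axis b 1)) * y $ a * z $ b) * (pairV (hv f (xtilde Q)) 0 $ k)"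
      by (simp add: Gam_def christoffel_formula[OF Q] sum_distrib_left mult_ac)
    then show ?thesis unfolding key by simp
  qed
  then show ?thesis by (simp add: vec_eq_iff)
qed

lemma s_deriv:
  assumes q: "q \<in> S"
  shows "((\<lambda>q. (Hm f q *v yy) \<bullet> zz) has_derivative (\<lambda>w. Ds f q yy zz w)) (at q)"
proof -
  have e: "(\<lambda>q. (Hm f q *v yy) \<bullet> zz) = (\<lambda>q. \<Sum>k\<in>UNIV. \<Sum>l\<in>UNIV. partial k (partial l f) q * yy$l * zz$k)"
    by (simp add: inner_vec_def matrix_vector_mult_def Hm_def sum_distrib_left mult_ac)
  have pk: "(partial k (partial l f) has_derivative (\<lambda>w. \<Sum>m\<in>UNIV. w$m * partial m (partial k (partial l f)) q)) (at q)" for k l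
    using partial_has_deriv diff_at_S[OF S_open d2 q] by blast
  have "((\<lambda>q. \<Sum>k\<in>UNIV. \<Sum>l\<in>UNIV. partial k (partial l f) q * yy$l * zz$k) has_derivative
      (\<lambda>w. \<Sum>k\<in>UNIV. \<Sum>l\<in>UNIV. (\<Sum>m\<in>UNIV. w$m * partial m (partial k (partial l f)) q) * yy$l * zz$k)) (at q)"
    by (intro has_derivative_sum has_derivative_mult_left pk)
  then show ?thesis unfolding e Ds_def .
qed

lemma C_deriv:
  assumes P: "xtilde P \<in> S"
  shows "((\<lambda>Q. ((Hm f (xtilde Q) *v yy) \<bullet> zz) *\<^sub>R pairV (hv f (xtilde Q)) 0) has_derivative
     (\<lambda>u. Ds f (xtilde P) yy zz (xtilde u) *\<^sub>R pairV (hv f (xtilde P)) 0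
        + ((Hm f (xtilde P) *v yy) \<bullet> zz) *\<^sub>R pairV (Hm f (xtilde P) *v xtilde u) 0)) (at P)"
proof -
  have lx: "(xtilde has_derivative xtilde) (at P)"
    using bounded_linear_xtilde bounded_linear_imp_has_derivative by blast
  have d1: "((\<lambda>Q. (Hm f (xtilde Q) *v yy) \<bullet> zz) has_derivative (\<lambda>u. Ds f (xtilde P) yy zz (xtilde u))) (at P)"
    using has_derivative_compose[OF lx s_deriv[OF P]] .
  have bp: "bounded_linear (\<lambda>x::real^'n. pairV x 0)"
    using linear_pairV0 linear_conv_bounded_linear by blast
  have d2: "((\<lambda>Q. pairV (hv f (xtilde Q)) 0) has_derivative (\<lambda>u. pairV (Hm f (xtilde P) *v xtilde u) 0)) (at P)"
    using has_derivative_compose[OF hvx_deriv[OF P] bounded_linear_imp_has_derivative[OF bp]] .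
  show ?thesis
    using has_derivative_scaleR[OF d1 d2] by (simp add: add.commute)
qed

lemma Ds_sym:
  assumes q: "q \<in> S"
  shows "Ds f q y z x = Ds f q x z y"
proof -
  let ?T = "\<lambda>m k l. partial m (partial k (partial l f)) q"
  have inner: "(\<Sum>l\<in>UNIV. (\<Sum>m\<in>UNIV. x$m * ?T m k l) * y$l) = (\<Sum>l\<in>UNIV. (\<Sum>m\<in>UNIV. y$m * ?T m k l) * x$l)" for k
  proof -
    have "(\<Sum>l\<in>UNIV. (\<Sum>m\<in>UNIV. y$m * ?T m k l) * x$l) = (\<Sum>l\<in>UNIV. \<Sum>m\<in>UNIV. y$m * ?T m k l * x$l)"
      by (simp add: sum_distrib_right)
    also have "\<dots> = (\<Sum>l\<in>UNIV. \<Sum>m\<in>UNIV. y$l * ?T l k m * x$m)"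
      by (rule sum.swap)
    also have "\<dots> = (\<Sum>l\<in>UNIV. \<Sum>m\<in>UNIV. x$m * ?T m k l * y$l)"
      using sym3[OF q] by (intro sum.cong refl) (simp add: mult_ac)
    also have "\<dots> = (\<Sum>l\<in>UNIV. (\<Sum>m\<in>UNIV. x$m * ?T m k l) * y$l)"
      by (simp add: sum_distrib_right)
    finally show ?thesis by simp
  qed
  have "Ds f q y z x = (\<Sum>k\<in>UNIV. (\<Sum>l\<in>UNIV. (\<Sum>m\<in>UNIV. x$m * ?T m k l) * y$l) * z$k)"
    unfolding Ds_def by (simp add: sum_distrib_right)
  also have "\<dots> = (\<Sum>k\<in>UNIV. (\<Sum>l\<in>UNIV. (\<Sum>m\<in>UNIV. y$m * ?T m k l) * x$l) * z$k)"
    using inner by simp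
  also have "\<dots> = Ds f q x z y"
    unfolding Ds_def by (simp add: sum_distrib_right)
  finally show ?thesis .
qed

lemma curv_formula:
  assumes P: "xtilde P \<in> S"
  shows "curvature (induced_metric f) P x y z =
    pairV (((Hm f (xtilde P) *v xtilde y) \<bullet> xtilde z) *\<^sub>R (Hm f (xtilde P) *v xtilde x)
         - ((Hm f (xtilde P) *v xtilde x) \<bullet> xtilde z) *\<^sub>R (Hm f (xtilde P) *v xtilde y)) 0"
proof -
  let ?g = "induced_metric f" and ?q = "xtilde P"
  let ?H = "Hm f ?q" and ?h = "hv f ?q"
  have cv: "cov_deriv ?g (\<lambda>_. yy) (\<lambda>_. zz) = (\<lambda>Q. Gam ?g Q yy zz)" for yy zz
    by (rule ext) (simp add: cov_deriv_const)
  have fd: "frechet_derivative (\<lambda>Q. Gam ?g Q yy zz) (at P) =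
     (\<lambda>u. Ds f ?q (xtilde yy) (xtilde zz) (xtilde u) *\<^sub>R pairV ?h 0
        + ((?H *v xtilde yy) \<bullet> xtilde zz) *\<^sub>R pairV (?H *v xtilde u) 0)" for yy zz
  proof -
    have "frechet_derivative (\<lambda>Q. Gam ?g Q yy zz) (at P) =
      frechet_derivative (\<lambda>Q. ((Hm f (xtilde Q) *v xtilde yy) \<bullet> xtilde zz) *\<^sub>R pairV (hv f (xtilde Q)) 0) (at P)"
      by (rule frechet_local[OF open_U0[OF S_open]]) (use P Gam_formula in auto)
    also have "\<dots> = (\<lambda>u. Ds f ?q (xtilde yy) (xtilde zz) (xtilde u) *\<^sub>R pairV ?h 0
        + ((?H *v xtilde yy) \<bullet> xtilde zz) *\<^sub>R pairV (?H *v xtilde u) 0)"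
      using frechet_derivative_at[OF C_deriv[OF P]] by metis
    finally show ?thesis .
  qed
  have g0: "xtilde (Gam ?g P yy zz) = 0" for yy zz
    by (simp add: Gam_formula[OF P] xtilde_scaleR)
  have lb: "lie_bracket (\<lambda>_. x) (\<lambda>_. y) = (\<lambda>_. 0 :: real^('n+'n))"
    by (rule ext) (simp add: lie_bracket_def)
  have c1: "cov_deriv ?g (\<lambda>_. x) (cov_deriv ?g (\<lambda>_. y) (\<lambda>_. z)) P =
      Ds f ?q (xtilde y) (xtilde z) (xtilde x) *\<^sub>R pairV ?h 0 + ((?H *v xtilde y) \<bullet> xtilde z) *\<^sub>R pairV (?H *v xtilde x) 0"
    by (simp add: cov_deriv_const fd cv Gam_formula[OF P] xtilde_scaleR)
  have c2: "cov_deriv ?g (\<lambda>_. y) (cov_deriv ?g (\<lambda>_. x) (\<lambda>_. z)) P =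
      Ds f ?q (xtilde x) (xtilde z) (xtilde y) *\<^sub>R pairV ?h 0 + ((?H *v xtilde x) \<bullet> xtilde z) *\<^sub>R pairV (?H *v xtilde y) 0"
    by (simp add: cov_deriv_const fd cv Gam_formula[OF P] xtilde_scaleR)
  have c3: "cov_deriv ?g (lie_bracket (\<lambda>_. x) (\<lambda>_. y)) (\<lambda>_. z) P = 0"
    unfolding lb by (simp add: cov_deriv_const Gam_formula[OF P])
  have ds: "Ds f ?q (xtilde y) (xtilde z) (xtilde x) = Ds f ?q (xtilde x) (xtilde z) (xtilde y)"
    using Ds_sym[OF P] .
  show ?thesis
    unfolding curvature_def Let_def c1 c2 c3 ds
    by (simp add: pairV_diff[symmetric] pairV_scaleR[symmetric])
qed

end


lemma indep2_nz2: "indep2 a b \<Longrightarrow> b \<noteq> 0"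
proof
  assume H: "indep2 a b" and "b = 0"
  then have "0 *\<^sub>R a + 1 *\<^sub>R b = 0" by simp
  from H[unfolded indep2_def, rule_format, OF this] show False by simp
qed

lemma indep2_nz1: "indep2 a b \<Longrightarrow> a \<noteq> 0"
proof
  assume H: "indep2 a b" and "a = 0"
  then have "1 *\<^sub>R a + 0 *\<^sub>R b = 0" by simp
  from H[unfolded indep2_def, rule_format, OF this] show False by simp
qed

lemma indep2_swap: "indep2 a b \<Longrightarrow> indep2 b a"
  unfolding indep2_def by (metis add.commute)

lemma indep2_neg2: "indep2 a b \<Longrightarrow> indep2 a (- b)"
  unfolding indep2_def
proof (intro allI impI)
  fix s t assume H: "\<forall>s t. s *\<^sub>R a + t *\<^sub>R b = 0 \<longrightarrow> s = 0 \<and> t = 0" and e: "s *\<^sub>R a + t *\<^sub>R - b = 0"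
  have "s *\<^sub>R a + (-t) *\<^sub>R b = 0" using e by simp
  from H[rule_format, OF this] show "s = 0 \<and> t = 0" by simp
qed

lemma indep2_scale: "indep2 a b \<Longrightarrow> c \<noteq> 0 \<Longrightarrow> indep2 (c *\<^sub>R a) (c *\<^sub>R b)"
  unfolding indep2_def
proof (intro allI impI)
  fix s t assume H: "\<forall>s t. s *\<^sub>R a + t *\<^sub>R b = 0 \<longrightarrow> s = 0 \<and> t = 0" and c: "c \<noteq> 0"
    and e: "s *\<^sub>R c *\<^sub>R a + t *\<^sub>R c *\<^sub>R b = 0"
  have "(s * c) *\<^sub>R a + (t * c) *\<^sub>R b = 0" using e by simp
  from H[rule_format, OF this] c show "s = 0 \<and> t = 0" by simp
qed

lemma ext2:
  fixes a b c d :: "real^'n::finite"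
  assumes "indep2 a b" "indep2 c d"
  shows "\<exists>M. linear M \<and> bij M \<and> M a = c \<and> M b = d"
proof -
  have ab: "a \<noteq> b" and cd: "c \<noteq> d" using assms indep2_neq by blast+
  define F where "F x = (if x = a then c else d)" for x
  have i1: "independent {a, b}" using indep2_iff[OF ab] assms by blast
  have im: "F ` {a, b} = {c, d}" using ab by (auto simp: F_def)
  have i2: "independent (F ` {a, b})" unfolding im using indep2_iff[OF cd] assms by blast
  have inj: "inj_on F {a, b}" using ab cd by (auto simp: F_def inj_on_def)
  obtain M where M: "linear M" "inj M" "\<forall>x\<in>{a,b}. M x = F x"
    using linear_independent_extend_inj[OF i1 i2 inj] by blast
  have "surj M" using linear_inj_imp_surj M by blast
  then have "bij M" using M by (simp add: bij_def)
  moreover have "M a = c" "M b = d" using M ab by (auto simp: F_def)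
  ultimately show ?thesis using M by blast
qed

definition Op :: "real^'n::finite \<Rightarrow> real^'n \<Rightarrow> real^'n \<Rightarrow> real^'n \<Rightarrow> real^('n+'n) \<Rightarrow> real^('n+'n)" where
  "Op v1 v2 w1 w2 z = pairV ((w1 \<bullet> xtilde z) *\<^sub>R v1 + (w2 \<bullet> xtilde z) *\<^sub>R v2) 0"

lemma linear_Op: "linear (Op v1 v2 w1 w2)"
proof (rule linearI)
  fix x y show "Op v1 v2 w1 w2 (x + y) = Op v1 v2 w1 w2 x + Op v1 v2 w1 w2 y"
    unfolding Op_def by (simp add: xtilde_add inner_add_right scaleR_add_left pairV_add[symmetric])
next
  fix r x show "Op v1 v2 w1 w2 (r *\<^sub>R x) = r *\<^sub>R Op v1 v2 w1 w2 x"
    unfolding Op_def by (simp add: xtilde_scaleR pairV_scaleR[symmetric] scaleR_add_right)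
qed

lemma op_similar:
  fixes v1 v2 w1 w2 v1' v2' w1' w2' :: "real^'n::finite"
  assumes "indep2 v1 v2" "indep2 w1 w2" "indep2 v1' v2'" "indep2 w1' w2'"
  shows "same_jordan_form (Op v1 v2 w1 w2) (Op v1' v2' w1' w2')"
proof -
  obtain M where M: "linear M" "bij M" "M v1' = v1" "M v2' = v2"
    using ext2[OF assms(3) assms(1)] by blast
  obtain K where K: "linear K" "bij K" "K w1 = w1'" "K w2 = w2'"
    using ext2[OF assms(2) assms(4)] by blast
  define N where "N = adjoint K"
  have lN: "linear N" unfolding N_def using adjoint_linear K by blast
  have adj: "w \<bullet> N z = K w \<bullet> z" for w z unfolding N_def using adjoint_works K by blast
  have injN: "inj N"
  proof -
    have "z = 0" if "N z = 0" for z
    proof -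
      obtain x where "K x = z" using K bij_def by (metis surj_def)
      then have "z \<bullet> z = x \<bullet> N z" using adj by simp
      then show "z = 0" using that by simp
    qed
    then show ?thesis using linear_injective_0[OF lN] by blast
  qed
  have surjN: "surj N" using linear_inj_imp_surj[OF lN injN] .
  define T where "T z = pairV (M (xp z)) (N (xtilde z))" for z
  have lT: "linear T" unfolding T_def[abs_def]
    by (rule linear_pairV) (use M lN linear_xp linear_xtilde linear_compose in \<open>auto simp: o_def\<close>)
  have injT: "inj T"
  proof (rule injI)
    fix z1 z2 assume "T z1 = T z2"
    then have "M (xp z1) = M (xp z2)" "N (xtilde z1) = N (xtilde z2)" by (auto simp: T_def)
    then have "xp z1 = xp z2" "xtilde z1 = xtilde z2"
      using M(2) injN by (auto simp: bij_def dest: injD)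
    then show "z1 = z2" by (metis pairV_decomp)
  qed
  have surjT: "surj T"
  proof -
    have "y \<in> range T" for y
    proof -
      obtain a where a: "M a = xp y" using M(2) by (metis bij_def surj_def)
      obtain b where b: "N b = xtilde y" using surjN by (metis surj_def)
      have "T (pairV a b) = y" by (simp add: T_def a b pairV_decomp)
      then show ?thesis by (metis rangeI)
    qed
    then show ?thesis by blast
  qed
  have comm: "Op v1 v2 w1 w2 \<circ> T = T \<circ> Op v1' v2' w1' w2'"
  proof (rule ext)
    fix z
    have "(Op v1 v2 w1 w2 \<circ> T) z = pairV ((w1' \<bullet> xtilde z) *\<^sub>R v1 + (w2' \<bullet> xtilde z) *\<^sub>R v2) 0"
      by (simp add: Op_def T_def adj K)
    also have "\<dots> = (T \<circ> Op v1' v2' w1' w2') z"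
      by (simp add: Op_def T_def M linear_add[OF M(1)] linear_scale[OF M(1)] linear_0[OF lN])
    finally show "(Op v1 v2 w1 w2 \<circ> T) z = (T \<circ> Op v1' v2' w1' w2') z" .
  qed
  show ?thesis unfolding same_jordan_form_def
    using lT injT surjT comm by (auto simp: bij_def)
qed

lemma gram_pos:
  fixes w1 w2 :: "real^'n::finite"
  assumes "indep2 w1 w2"
  shows "(w1 \<bullet> w1) * (w2 \<bullet> w2) - (w1 \<bullet> w2)^2 > 0"
proof -
  define d where "d = (w1 \<bullet> w1) * (w2 \<bullet> w2) - (w1 \<bullet> w2)^2"
  define v where "v = (w2 \<bullet> w2) *\<^sub>R w1 - (w1 \<bullet> w2) *\<^sub>R w2"
  have w2: "w2 \<bullet> w2 > 0" using indep2_nz2[OF assms] by simp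
  have "v \<noteq> 0"
  proof
    assume "v = 0"
    then have "(w2 \<bullet> w2) *\<^sub>R w1 + (- (w1 \<bullet> w2)) *\<^sub>R w2 = 0" by (simp add: v_def)
    from assms[unfolded indep2_def, rule_format, OF this] w2 show False by simp
  qed
  then have "v \<bullet> v > 0" by simp
  moreover have "v \<bullet> v = (w2 \<bullet> w2) * d"
    by (simp add: v_def d_def inner_diff_left inner_diff_right inner_commute power2_eq_square algebra_simps)
  ultimately have "(w2 \<bullet> w2) * d > 0" by simp
  with w2 have "d > 0" using zero_less_mult_pos by blast
  then show ?thesis unfolding d_def .
qed

lemma op_rank:
  fixes v1 v2 w1 w2 :: "real^'n::finite"
  assumes v: "indep2 v1 v2" and w: "indep2 w1 w2"
  shows "dim (range (Op v1 v2 w1 w2)) = 2"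
proof -
  define d where "d = (w1 \<bullet> w1) * (w2 \<bullet> w2) - (w1 \<bullet> w2)^2"
  have d: "d > 0" using gram_pos[OF w] by (simp add: d_def)
  define z1 where "z1 = (1/d) *\<^sub>R ((w2 \<bullet> w2) *\<^sub>R w1 - (w1 \<bullet> w2) *\<^sub>R w2)"
  define z2 where "z2 = (1/d) *\<^sub>R ((w1 \<bullet> w1) *\<^sub>R w2 - (w1 \<bullet> w2) *\<^sub>R w1)"
  have e1: "w1 \<bullet> ((w2 \<bullet> w2) *\<^sub>R w1 - (w1 \<bullet> w2) *\<^sub>R w2) = d"
    by (simp add: d_def inner_diff_right power2_eq_square inner_commute mult.commute)
  have e2: "w2 \<bullet> ((w2 \<bullet> w2) *\<^sub>R w1 - (w1 \<bullet> w2) *\<^sub>R w2) = 0"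
    by (simp add: inner_diff_right inner_commute mult.commute)
  have e3: "w2 \<bullet> ((w1 \<bullet> w1) *\<^sub>R w2 - (w1 \<bullet> w2) *\<^sub>R w1) = d"
    by (simp add: d_def inner_diff_right power2_eq_square inner_commute mult.commute)
  have e4: "w1 \<bullet> ((w1 \<bullet> w1) *\<^sub>R w2 - (w1 \<bullet> w2) *\<^sub>R w1) = 0"
    by (simp add: inner_diff_right inner_commute mult.commute)
  have z1: "w1 \<bullet> z1 = 1" "w2 \<bullet> z1 = 0"
    using d unfolding z1_def inner_scaleR_right e1 e2 by simp_all
  have z2: "w1 \<bullet> z2 = 0" "w2 \<bullet> z2 = 1"
    using d unfolding z2_def inner_scaleR_right e3 e4 by simp_all
  define p1 where "p1 = pairV v1 0"
  define p2 where "p2 = pairV v2 0"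
  have p1: "Op v1 v2 w1 w2 (pairV 0 z1) = p1" by (simp add: Op_def z1 p1_def)
  have p2: "Op v1 v2 w1 w2 (pairV 0 z2) = p2" by (simp add: Op_def z2 p2_def)
  have sub: "subspace (range (Op v1 v2 w1 w2))"
    using linear_subspace_image[OF linear_Op subspace_UNIV] .
  have "range (Op v1 v2 w1 w2) = span {p1, p2}"
  proof
    show "range (Op v1 v2 w1 w2) \<subseteq> span {p1, p2}"
    proof
      fix y assume "y \<in> range (Op v1 v2 w1 w2)"
      then obtain z where y: "y = Op v1 v2 w1 w2 z" by blast
      have "y = (w1 \<bullet> xtilde z) *\<^sub>R p1 + (w2 \<bullet> xtilde z) *\<^sub>R p2"
        by (simp add: y Op_def p1_def p2_def pairV_scaleR[symmetric] pairV_add[symmetric])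
      then show "y \<in> span {p1, p2}"
        by (simp add: span_add span_scale span_base)
    qed
  next
    show "span {p1, p2} \<subseteq> range (Op v1 v2 w1 w2)"
      by (rule span_minimal[OF _ sub]) (metis p1 p2 empty_subsetI insert_subset rangeI)
  qed
  moreover have "indep2 p1 p2"
    unfolding p1_def p2_def
    using indep2_linear_inj[OF linear_pairV0 _ v] by (simp add: inj_def)
  then have "independent {p1, p2}" "p1 \<noteq> p2" using indep2_iff indep2_neq by blast+
  ultimately have "dim (range (Op v1 v2 w1 w2)) = card {p1, p2}"
    using dim_span_eq_card_independent by metis
  then show ?thesis using \<open>p1 \<noteq> p2\<close> by simp
qed



definition Bq :: "real^'n::finite \<Rightarrow> real^('n+'n) \<Rightarrow> real^('n+'n) \<Rightarrow> real" where
  "Bq h u v = xp u \<bullet> xtilde v + xtilde u \<bullet> xp v + (h \<bullet> xtilde u) * (h \<bullet> xtilde v)"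

lemma linear_scaleR_const: "linear (\<lambda>w::'a::real_vector. c *\<^sub>R w)"
  by (rule linearI) (simp_all add: scaleR_add_right)

lemma index_eq:
  fixes h :: "real^'n::finite" and R :: "real \<Rightarrow> bool"
  assumes R0: "\<not> R 0"
    and ex: "\<And>w. w \<noteq> 0 \<Longrightarrow> R (Bq h (pairV (c *\<^sub>R w) w) (pairV (c *\<^sub>R w) w))"
  shows "Max {dim S | S. subspace S \<and> (\<forall>v\<in>S. v \<noteq> 0 \<longrightarrow> R (Bq h v v))} = CARD('n)"
proof -
  let ?D = "{dim S | S. subspace S \<and> (\<forall>v\<in>S. v \<noteq> 0 \<longrightarrow> R (Bq h v v))}"
  have ub: "d \<le> CARD('n)" if dD: "d \<in> ?D" for d
  proof -
    obtain S where S: "d = dim S" "subspace S" "\<forall>v\<in>S. v \<noteq> 0 \<longrightarrow> R (Bq h v v)"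
      using dD by blast
    have inj: "inj_on xtilde (span S)"
    proof (rule inj_onI)
      fix u v assume u: "u \<in> span S" and v: "v \<in> span S" and e: "xtilde u = xtilde v"
      have sS: "span S = S" using S(2) span_eq_iff by blast
      have w: "u - v \<in> S" using u v S(2) subspace_diff unfolding sS by blast
      have "xtilde (u - v) = 0" using e linear_diff[OF linear_xtilde, of u v] by simp
      then have "Bq h (u - v) (u - v) = 0" by (simp add: Bq_def)
      then have "u - v = 0"
      proof (rule contrapos_pp)
        assume "u - v \<noteq> 0"
        then have "R (Bq h (u - v) (u - v))" using S(3) w by blast
        then show "Bq h (u - v) (u - v) \<noteq> 0" using R0 by auto
      qed
      then show "u = v" by simp
    qed
    have "dim S = dim (xtilde ` S)" using dim_image_eq[OF linear_xtilde inj] by simp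
    also have "\<dots> \<le> CARD('n)" by (rule dim_subset_UNIV_cart)
    finally show ?thesis using S by simp
  qed
  define Sx where "Sx = range (\<lambda>w::real^'n. pairV (c *\<^sub>R w) w)"
  have lin: "linear (\<lambda>w::real^'n. pairV (c *\<^sub>R w) w)"
    by (rule linear_pairV[OF linear_scaleR_const]) (simp add: linear_id[unfolded id_def])
  have sub: "subspace Sx" unfolding Sx_def using linear_subspace_image[OF lin subspace_UNIV] .
  have prp: "\<forall>v\<in>Sx. v \<noteq> 0 \<longrightarrow> R (Bq h v v)"
  proof (intro ballI impI)
    fix v assume "v \<in> Sx" "v \<noteq> 0"
    then obtain w where v: "v = pairV (c *\<^sub>R w) w" unfolding Sx_def by blast
    have "w \<noteq> 0" using \<open>v \<noteq> 0\<close> v by auto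
    then show "R (Bq h v v)" using ex v by blast
  qed
  have injx: "inj_on (\<lambda>w::real^'n. pairV (c *\<^sub>R w) w) (span UNIV)"
    unfolding inj_on_def by simp
  have "dim Sx = dim (UNIV :: (real^'n) set)"
    unfolding Sx_def using dim_image_eq[OF lin injx] .
  then have "dim Sx = CARD('n)" by simp
  then have "\<exists>S. CARD('n) = dim S \<and> subspace S \<and> (\<forall>v\<in>S. v \<noteq> 0 \<longrightarrow> R (Bq h v v))"
    using sub prp by (intro exI[of _ Sx]) simp
  then have mem: "CARD('n) \<in> ?D" by simp
  have fin: "finite ?D"
  proof (rule finite_subset[of _ "{..CARD('n)}"])
    show "?D \<subseteq> {..CARD('n)}"
    proof
      fix d assume "d \<in> ?D"
      then show "d \<in> {..CARD('n)}" using ub by simp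
    qed
  qed simp
  show ?thesis by (rule Max_eqI[OF fin ub mem])
qed

lemma Bq_pair: "Bq h (pairV (c *\<^sub>R w) w) (pairV (c *\<^sub>R w) w) = 2 * c * (w \<bullet> w) + (h \<bullet> w)^2"
  by (simp add: Bq_def power2_eq_square inner_commute)

lemma signature_Bq: "has_signature (Bq (h::real^'n::finite)) CARD('n) CARD('n)"
proof -
  have neg: "neg_index (Bq h) = CARD('n)"
    unfolding neg_index_def
  proof (rule index_eq[where R = "\<lambda>x. x < 0" and c = "- (h \<bullet> h + 1)"])
    fix w :: "real^'n" assume w: "w \<noteq> 0"
    have ww: "w \<bullet> w > 0" using w by simp
    have cs: "(h \<bullet> w)^2 \<le> (h \<bullet> h) * (w \<bullet> w)" by (rule Cauchy_Schwarz_ineq)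
    have "2 * (- (h \<bullet> h + 1)) * (w \<bullet> w) + (h \<bullet> w)^2 \<le> (- (h \<bullet> h) - 2) * (w \<bullet> w)"
      using cs by (simp add: algebra_simps)
    also have "\<dots> < 0"
    proof -
      have "- (h \<bullet> h) - 2 < 0" using inner_ge_zero[of h] by linarith
      then show ?thesis using ww mult_neg_pos by blast
    qed
    finally show "Bq h (pairV (- (h \<bullet> h + 1) *\<^sub>R w) w) (pairV (- (h \<bullet> h + 1) *\<^sub>R w) w) < 0"
      unfolding Bq_pair .
  qed simp
  have pos: "pos_index (Bq h) = CARD('n)"
    unfolding pos_index_def
  proof (rule index_eq[where R = "\<lambda>x. x > 0" and c = 1])
    fix w :: "real^'n" assume w: "w \<noteq> 0"
    have ww: "w \<bullet> w > 0" using w by simp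
    have "0 < 2 * 1 * (w \<bullet> w) + (h \<bullet> w)^2" using ww by (simp add: add_pos_nonneg)
    then show "Bq h (pairV (1 *\<^sub>R w) w) (pairV (1 *\<^sub>R w) w) > 0"
      unfolding Bq_pair .
  qed simp
  show ?thesis using neg pos by (simp add: has_signature_def)
qed



lemma Bq_sym: "Bq h x y = Bq h y x"
  by (simp add: Bq_def inner_commute mult.commute add.commute)

lemma Bq_expand:
  "Bq h (a *\<^sub>R x + b *\<^sub>R y) (a *\<^sub>R x + b *\<^sub>R y) = a^2 * Bq h x x + 2*a*b*Bq h x y + b^2 * Bq h y y"
  by (simp add: Bq_def xp_add xp_scaleR xtilde_add xtilde_scaleR inner_add_left inner_add_right inner_commute power2_eq_square algebra_simps)

lemma pair_lemma:
  fixes h :: "real^'n::finite" and H :: "real^'n^'n" and R :: "real \<Rightarrow> bool"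
  assumes detH: "det H \<noteq> 0" and R0: "\<not> R 0" and Rprod: "\<And>a G. R a \<Longrightarrow> R (a * G) \<Longrightarrow> G > 0"
    and ind: "independent {e1, e2}" "e1 \<noteq> e2"
    and dfn: "\<forall>v\<in>span {e1, e2}. v \<noteq> 0 \<longrightarrow> R (Bq h v v)"
  shows "indep2 (H *v xtilde e1) (H *v xtilde e2) \<and> Bq h e1 e1 * Bq h e2 e2 - (Bq h e1 e2)^2 > 0"
proof
  have i2: "indep2 e1 e2" using indep2_iff ind by blast
  have insp: "a *\<^sub>R e1 + b *\<^sub>R e2 \<in> span {e1, e2}" for a b
    by (intro span_add span_scale span_base) auto
  have it: "indep2 (xtilde e1) (xtilde e2)"
    unfolding indep2_def
  proof (intro allI impI)
    fix s t assume e: "s *\<^sub>R xtilde e1 + t *\<^sub>R xtilde e2 = 0"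
    define v where "v = s *\<^sub>R e1 + t *\<^sub>R e2"
    have "xtilde v = 0" using e by (simp add: v_def xtilde_add xtilde_scaleR)
    then have b0: "Bq h v v = 0" by (simp add: Bq_def)
    have "v = 0"
    proof (rule ccontr)
      assume "v \<noteq> 0"
      then have "R (Bq h v v)" using dfn insp v_def by blast
      then show False using b0 R0 by simp
    qed
    then show "s = 0 \<and> t = 0" using i2 unfolding indep2_def v_def by blast
  qed
  have linH: "linear ((*v) H)" by (rule matrix_vector_mul_linear)
  have injH: "inj ((*v) H)"
    using det_nz_iff_inj[OF linH] detH by (simp add: matrix_of_matrix_vector_mul)
  show "indep2 (H *v xtilde e1) (H *v xtilde e2)"
    using indep2_linear_inj[OF linH injH it] .
next
  have i2: "indep2 e1 e2" using indep2_iff ind by blast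
  have insp: "a *\<^sub>R e1 + b *\<^sub>R e2 \<in> span {e1, e2}" for a b
    by (intro span_add span_scale span_base) auto
  define B11 where "B11 = Bq h e1 e1"
  define B12 where "B12 = Bq h e1 e2"
  define B22 where "B22 = Bq h e2 e2"
  have e2nz: "e2 \<noteq> 0" using indep2_nz2[OF i2] .
  have "e2 \<in> span {e1, e2}" by (simp add: span_base)
  then have R22: "R B22" using dfn e2nz by (simp add: B22_def)
  then have B22nz: "B22 \<noteq> 0" using R0 by auto
  define v where "v = B22 *\<^sub>R e1 + (- B12) *\<^sub>R e2"
  have "v \<noteq> 0"
  proof
    assume "v = 0"
    from i2[unfolded indep2_def, rule_format, OF this[unfolded v_def]] B22nz show False by simp
  qed
  then have "R (Bq h v v)" using dfn insp v_def by blast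
  moreover have "Bq h v v = B22 * (B11 * B22 - B12^2)"
    unfolding v_def Bq_expand B11_def[symmetric] B12_def[symmetric] B22_def[symmetric]
    by (simp add: power2_eq_square algebra_simps)
  ultimately have "R (B22 * (B11 * B22 - B12^2))" by simp
  then show "Bq h e1 e1 * Bq h e2 e2 - (Bq h e1 e2)^2 > 0"
    using Rprod[OF R22] unfolding B11_def B12_def B22_def by blast
qed

context
  fixes f :: "real^'n::finite \<Rightarrow> real" and S :: "(real^'n) set"
  assumes S_open: "open S" and smooth: "smooth_on S f"
begin

lemma gP: "xtilde P \<in> S \<Longrightarrow> induced_metric f P = Bq (hv f (xtilde P))"
  by (intro ext) (simp add: g_formula[OF S_open smooth] Bq_def)

lemma plane_is_Op:
  fixes R :: "real \<Rightarrow> bool"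
  assumes P: "xtilde P \<in> S" and dt: "det (Hm f (xtilde P)) \<noteq> 0"
    and R0: "\<not> R 0" and Rprod: "\<And>a G. R a \<Longrightarrow> R (a * G) \<Longrightarrow> G > 0"
    and ind: "independent {e1, e2}" "e1 \<noteq> e2"
    and dfn: "\<forall>v\<in>span {e1, e2}. v \<noteq> 0 \<longrightarrow> R (induced_metric f P v v)"
  shows "\<exists>v1 v2 w1 w2. indep2 v1 v2 \<and> indep2 w1 w2 \<and> plane_curv (induced_metric f) P e1 e2 = Op v1 v2 w1 w2"
proof -
  let ?h = "hv f (xtilde P)" and ?H = "Hm f (xtilde P)"
  have dfn': "\<forall>v\<in>span {e1, e2}. v \<noteq> 0 \<longrightarrow> R (Bq ?h v v)" using dfn unfolding gP[OF P] .
  have pl: "indep2 (?H *v xtilde e1) (?H *v xtilde e2) \<and> Bq ?h e1 e1 * Bq ?h e2 e2 - (Bq ?h e1 e2)^2 > 0"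
    using pair_lemma[OF dt R0 Rprod ind dfn'] .
  define u1 where "u1 = ?H *v xtilde e1"
  define u2 where "u2 = ?H *v xtilde e2"
  define c where "c = 1 / sqrt \<bar>Bq ?h e1 e1 * Bq ?h e2 e2 - (Bq ?h e1 e2)^2\<bar>"
  have G: "Bq ?h e1 e1 * Bq ?h e2 e2 - (Bq ?h e1 e2)^2 > 0" using pl by (rule conjunct2)
  then have "sqrt \<bar>Bq ?h e1 e1 * Bq ?h e2 e2 - (Bq ?h e1 e2)^2\<bar> > 0" by (rule real_sqrt_gt_zero[OF zero_less_abs_iff[THEN iffD2, OF less_imp_neq[symmetric]]])
  then have "c > 0" unfolding c_def by (rule divide_pos_pos[OF zero_less_one])
  then have c: "c \<noteq> 0" by (rule less_imp_neq[symmetric])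
  have iu: "indep2 u1 u2" using pl unfolding u1_def u2_def by (rule conjunct1)
  have "plane_curv (induced_metric f) P e1 e2 = Op (c *\<^sub>R u1) (c *\<^sub>R u2) u2 (- u1)"
  proof (rule ext)
    fix z
    have "plane_curv (induced_metric f) P e1 e2 z = c *\<^sub>R curvature (induced_metric f) P e1 e2 z"
      unfolding plane_curv_def gP[OF P] c_def by (rule refl)
    also have "curvature (induced_metric f) P e1 e2 z = pairV ((u2 \<bullet> xtilde z) *\<^sub>R u1 - (u1 \<bullet> xtilde z) *\<^sub>R u2) 0"
      unfolding curv_formula[OF S_open smooth P] u1_def u2_def by (rule refl)
    also have "c *\<^sub>R pairV ((u2 \<bullet> xtilde z) *\<^sub>R u1 - (u1 \<bullet> xtilde z) *\<^sub>R u2) 0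
        = pairV (c *\<^sub>R ((u2 \<bullet> xtilde z) *\<^sub>R u1 - (u1 \<bullet> xtilde z) *\<^sub>R u2)) 0"
      using pairV_scaleR[of c "(u2 \<bullet> xtilde z) *\<^sub>R u1 - (u1 \<bullet> xtilde z) *\<^sub>R u2" 0] by simp
    also have "c *\<^sub>R ((u2 \<bullet> xtilde z) *\<^sub>R u1 - (u1 \<bullet> xtilde z) *\<^sub>R u2)
        = (u2 \<bullet> xtilde z) *\<^sub>R (c *\<^sub>R u1) + ((- u1) \<bullet> xtilde z) *\<^sub>R (c *\<^sub>R u2)"
      by (simp add: scaleR_right_diff_distrib mult.commute)
    also have "pairV \<dots> 0 = Op (c *\<^sub>R u1) (c *\<^sub>R u2) u2 (- u1) z"
      unfolding Op_def by (rule refl)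
    finally show "plane_curv (induced_metric f) P e1 e2 z = Op (c *\<^sub>R u1) (c *\<^sub>R u2) u2 (- u1) z" .
  qed
  moreover have "indep2 (c *\<^sub>R u1) (c *\<^sub>R u2)" using indep2_scale[OF iu c] .
  moreover have "indep2 u2 (- u1)" using indep2_neg2[OF indep2_swap[OF iu]] .
  ultimately show ?thesis by blast
qed

lemma JIP_generic:
  fixes R :: "real \<Rightarrow> bool"
  assumes P: "xtilde P \<in> S" and dt: "det (Hm f (xtilde P)) \<noteq> 0"
    and R0: "\<not> R 0" and Rprod: "\<And>a G. R a \<Longrightarrow> R (a * G) \<Longrightarrow> G > 0"
    and Pr: "\<And>e1 e2. Pr e1 e2 \<longleftrightarrow> independent {e1, e2} \<and> e1 \<noteq> e2 \<and>
        (\<forall>v\<in>span {e1, e2}. v \<noteq> 0 \<longrightarrow> R (induced_metric f P v v))"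
  shows "(\<forall>e1 e2. Pr e1 e2 \<longrightarrow> dim (range (plane_curv (induced_metric f) P e1 e2)) = 2) \<and>
     (\<forall>e1 e2 f1 f2. Pr e1 e2 \<longrightarrow> Pr f1 f2 \<longrightarrow>
        same_jordan_form (plane_curv (induced_metric f) P e1 e2) (plane_curv (induced_metric f) P f1 f2))"
proof -
  have ex: "\<exists>v1 v2 w1 w2. indep2 v1 v2 \<and> indep2 w1 w2 \<and> plane_curv (induced_metric f) P e1 e2 = Op v1 v2 w1 w2"
    if pe: "Pr e1 e2" for e1 e2
  proof -
    have H: "independent {e1, e2} \<and> e1 \<noteq> e2 \<and> (\<forall>v\<in>span {e1, e2}. v \<noteq> 0 \<longrightarrow> R (induced_metric f P v v))"
      using pe unfolding Pr .
    show ?thesis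
      using plane_is_Op[where R=R, OF P dt R0 Rprod conjunct1[OF H] conjunct1[OF conjunct2[OF H]] conjunct2[OF conjunct2[OF H]]] .
  qed
  show ?thesis
  proof (intro conjI allI impI)
    fix e1 e2 assume pe: "Pr e1 e2"
    obtain v1 v2 w1 w2 where A: "indep2 v1 v2" "indep2 w1 w2" "plane_curv (induced_metric f) P e1 e2 = Op v1 v2 w1 w2"
      using ex[OF pe] by blast
    show "dim (range (plane_curv (induced_metric f) P e1 e2)) = 2"
      unfolding A(3) by (rule op_rank[OF A(1) A(2)])
  next
    fix e1 e2 f1 f2 assume pe: "Pr e1 e2" and pf: "Pr f1 f2"
    obtain v1 v2 w1 w2 where A: "indep2 v1 v2" "indep2 w1 w2" "plane_curv (induced_metric f) P e1 e2 = Op v1 v2 w1 w2"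
      using ex[OF pe] by blast
    obtain v1' v2' w1' w2' where B: "indep2 v1' v2'" "indep2 w1' w2'" "plane_curv (induced_metric f) P f1 f2 = Op v1' v2' w1' w2'"
      using ex[OF pf] by blast
    show "same_jordan_form (plane_curv (induced_metric f) P e1 e2) (plane_curv (induced_metric f) P f1 f2)"
      unfolding A(3) B(3) by (rule op_similar[OF A(1) A(2) B(1) B(2)])
  qed
qed

lemma nilp:
  assumes P: "xtilde P \<in> S"
  shows "nilpotent_curvature_at (induced_metric f) P"
  unfolding nilpotent_curvature_at_def
proof (intro allI exI[of _ 2])
  fix x y
  let ?R = "curvature (induced_metric f) P x y"
  show "?R ^^ 2 = (\<lambda>_. 0)"
  proof (rule ext)
    fix z
    have "(?R ^^ 2) z = ?R (?R z)" by (simp add: numeral_2_eq_2)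
    moreover have "xtilde (?R z) = 0" unfolding curv_formula[OF S_open smooth P] by simp
    moreover have "?R w = 0" if "xtilde w = 0" for w
      unfolding curv_formula[OF S_open smooth P] that by simp
    ultimately show "(?R ^^ 2) z = 0" by simp
  qed
qed

lemma det_cont: "continuous_on S (\<lambda>q. det (Hm f q))"
proof -
  have ce: "continuous_on S (\<lambda>q. Hm f q $ i $ j)" for i j
    unfolding Hm_def using c2[OF S_open smooth] by simp
  show ?thesis unfolding det_def
    by (intro continuous_on_sum continuous_on_mult continuous_on_const continuous_on_prod ce)
qed

end



theorem lemma5p2:
  fixes f :: "real^'n::finite \<Rightarrow> real" and S :: "(real^'n) set"
  assumes "open S" and "0 \<in> S" and "smooth_on S f"
    and "(f has_derivative (\<lambda>_. 0)) (at 0)"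
    and "det (\<chi> i j. partial i (partial j f) 0) \<noteq> 0"
  shows "\<exists>U :: (real^('n + 'n)) set. open U \<and> 0 \<in> U \<and>
     (\<forall>P\<in>U. has_signature (induced_metric f P) CARD('n) CARD('n)
        \<and> spacelike_rank2_JIP_at (induced_metric f) P
        \<and> timelike_rank2_JIP_at (induced_metric f) P
        \<and> nilpotent_curvature_at (induced_metric f) P)"
proof -
  note So = assms(1) and sm = assms(3)
  define S' where "S' = S \<inter> (\<lambda>q. det (Hm f q)) -` (- {0})"
  define U where "U = xtilde -` S'"
  have oS': "open S'" unfolding S'_def
    by (rule continuous_open_preimage[OF det_cont[OF So sm] So]) (simp add: open_Compl)
  have oU: "open U" unfolding U_def using open_U0[OF oS'] .
  have U0: "0 \<in> U" unfolding U_def S'_def using assms(2) assms(5) by (simp add: Hm_def)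
  have main: "has_signature (induced_metric f P) CARD('n) CARD('n)
        \<and> spacelike_rank2_JIP_at (induced_metric f) P
        \<and> timelike_rank2_JIP_at (induced_metric f) P
        \<and> nilpotent_curvature_at (induced_metric f) P" if PU: "P \<in> U" for P
  proof -
    have P: "xtilde P \<in> S" and dt: "det (Hm f (xtilde P)) \<noteq> 0"
      using PU unfolding U_def S'_def by auto
    have sig: "has_signature (induced_metric f P) CARD('n) CARD('n)"
      unfolding gP[OF So sm P] by (rule signature_Bq)
    have sp: "spacelike_rank2_JIP_at (induced_metric f) P"
      unfolding spacelike_rank2_JIP_at_def
    proof (rule JIP_generic[OF So sm P dt, where R = "\<lambda>x. x > 0"])
      fix a G :: real assume "a > 0" "a * G > 0"
      then show "G > 0" using zero_less_mult_pos by blast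
    qed (simp_all add: spacelike_pair_def)
    have tp: "timelike_rank2_JIP_at (induced_metric f) P"
      unfolding timelike_rank2_JIP_at_def
    proof (rule JIP_generic[OF So sm P dt, where R = "\<lambda>x. x < 0"])
      fix a G :: real assume "a < 0" "a * G < 0"
      then show "G > 0" by (simp add: mult_less_0_iff)
    qed (simp_all add: timelike_pair_def)
    show ?thesis using sig sp tp nilp[OF So sm P] by blast
  qed
  show ?thesis using oU U0 main by blast
qed

end
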